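(* Let $n\ge 3$ and w.l.o.g. $n$ odd, let $R=\{x_1,\dots,x_n\}$ with $x_i\in[0,B]$ for $B\in\mathbb{R}$, and $m=\frac{n+1}{2}$ so that $x_{(m)}=\mathrm{median}(R)$ (where $x_{(1)}\le\dots\le x_{(n)}$ are the sorted values). Then $$\mathrm{RS}_{\mathrm{median}}(R)=\tfrac12\max\{x_{(m+1)}-x_{(m)},\,x_{(m)}-x_{(m-1)}\}.$$
   Context: For a finite multiset of reals with sorted values $x_{(1)}\le\dots\le x_{(k)}$, $\mathrm{median}=x_{(\lceil k/2\rceil)}$ for odd $k$ and $\frac{x_{(k/2)}+x_{(k/2+1)}}{2}$ for even $k$. The retain sensitivity is $\mathrm{RS}_{\mathrm{median}}(R)=\max_{x\in[0,B]}|\mathrm{median}(R\cup\{x\})-\mathrm{median}(R)|$. *)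

theory Defs
  imports Main "HOL-Library.Multiset" Complex_Main
begin

definition ord_stat :: "real multiset \<Rightarrow> nat \<Rightarrow> real" where
  "ord_stat R i = sorted_list_of_multiset R ! (i - 1)"

definition median :: "real multiset \<Rightarrow> real" where
  "median R = (let k = size R in
     if odd k then ord_stat R ((k + 1) div 2)
     else (ord_stat R (k div 2) + ord_stat R (k div 2 + 1)) / 2)"

definition RS_median :: "real \<Rightarrow> real multiset \<Rightarrow> real" where
  "RS_median B R = (SUP x\<in>{0..B}. \<bar>median (R + {#x#}) - median R\<bar>)"

end

theory Submission
  imports Defs
begin

lemma insort_split:
  fixes x :: real
  assumes "sorted xs"
  shows "\<exists>j\<le>length xs. insort x xs = take j xs @ x # drop j xs \<and>
     (\<forall>i<j. xs!i \<le> x) \<and> (\<forall>i. j \<le> i \<and> i < length xs \<longrightarrow> x \<le> xs!i)"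
  using assms
proof (induction xs)
  case Nil
  then show ?case by auto
next
  case (Cons y ys)
  show ?case
  proof (cases "x \<le> y")
    case True
    have "\<forall>i. i < length (y#ys) \<longrightarrow> x \<le> (y#ys)!i"
    proof (intro allI impI)
      fix i assume "i < length (y#ys)"
      then show "x \<le> (y#ys)!i" using True Cons.prems
        by (cases i) (auto, meson order_trans nth_mem)
    qed
    then show ?thesis using True by (intro exI[of _ 0]) auto
  next
    case False
    from Cons obtain j where j: "j \<le> length ys" "insort x ys = take j ys @ x # drop j ys"
      "\<forall>i<j. ys!i \<le> x" "\<forall>i. j \<le> i \<and> i < length ys \<longrightarrow> x \<le> ys!i" by auto
    show ?thesis
    proof (intro exI[of _ "Suc j"] conjI allI impI)
      fix i assume "i < Suc j" then show "(y#ys)!i \<le> x" using j False by (cases i) auto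
    next
      fix i assume "Suc j \<le> i \<and> i < length (y#ys)"
      then show "x \<le> (y#ys)!i" using j by (cases i) auto
    qed (use j False in auto)
  qed
qed

lemma med_insert:
  fixes x :: real
  assumes "sorted xs" "length xs = 2*k+1" "k \<ge> 1"
  shows "insort x xs ! k + insort x xs ! (k+1) = xs!k + max (xs!(k-1)) (min x (xs!(k+1)))"
proof -
  obtain j where j: "j \<le> length xs" "insort x xs = take j xs @ x # drop j xs"
      "\<forall>i<j. xs!i \<le> x" "\<forall>i. j \<le> i \<and> i < length xs \<longrightarrow> x \<le> xs!i"
    using insort_split[OF assms(1)] by blast
  have mono: "\<And>i i'. i \<le> i' \<Longrightarrow> i' < length xs \<Longrightarrow> xs!i \<le> xs!i'"
    using assms(1) by (simp add: sorted_iff_nth_mono)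
  have A: "xs!(k-1) \<le> xs!k" "xs!k \<le> xs!(k+1)" using mono[of "k-1" k] mono[of k "k+1"] assms(2,3) by auto
  consider "j \<ge> k+2" | "j = k+1" | "j = k" | "j < k" by linarith
  then show ?thesis
  proof cases
    case 1
    then have "insort x xs ! k = xs!k" "insort x xs ! (k+1) = xs!(k+1)"
      using j(1,2) by (auto simp: nth_append)
    moreover have "xs!(k+1) \<le> x" using j(3) 1 by auto
    ultimately show ?thesis using A by auto
  next
    case 2
    then have "insort x xs ! k = xs!k" "insort x xs ! (k+1) = x"
      using j(1,2) by (auto simp: nth_append)
    moreover have "xs!k \<le> x" "x \<le> xs!(k+1)" using j(3,4) 2 assms(2,3) by auto
    ultimately show ?thesis using A by auto
  next
    case 3
    then have "insort x xs ! k = x" "insort x xs ! (k+1) = xs!k"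
      using j(1,2) assms by (auto simp: nth_append)
    moreover have "xs!(k-1) \<le> x" "x \<le> xs!k" using j(3,4) 3 assms by auto
    ultimately show ?thesis using A by auto
  next
    case 4
    then have "insort x xs ! k = xs!(k-1)" "insort x xs ! (k+1) = xs!k"
      using j(1,2) assms by (auto simp: nth_append nth_Cons')
    moreover have "x \<le> xs!(k-1)" using 4 assms by (intro j(4)[rule_format]) auto
    ultimately show ?thesis using A by auto
  qed
qed

theorem mainTheorem5:
  fixes R :: "real multiset" and B :: real and n m :: nat
  assumes "size R = n" and "n \<ge> 3" and "odd n"
    and "\<forall>x\<in>#R. 0 \<le> x \<and> x \<le> B"
    and "m = (n + 1) div 2"
  shows "RS_median B R =
    max (ord_stat R (m + 1) - ord_stat R m) (ord_stat R m - ord_stat R (m - 1)) / 2"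
proof -
  define xs where "xs = sorted_list_of_multiset R"
  obtain k where k: "n = 2*k+1" using assms(3) oddE by blast
  have k1: "k \<ge> 1" using k assms(2) by auto
  have len: "length xs = 2*k+1" using k assms(1) xs_def
    by (metis mset_sorted_list_of_multiset size_mset)
  have sxs: "sorted xs" unfolding xs_def by simp
  have mk: "m = k+1" using assms(5) k by simp
  define a where "a = xs!(k-1)"
  define b where "b = xs!k"
  define c where "c = xs!(k+1)"
  have os: "ord_stat R (m+1) = c" "ord_stat R m = b" "ord_stat R (m-1) = a"
    unfolding ord_stat_def a_def b_def c_def xs_def mk using k1
    by (auto simp: numeral_eq_Suc)
  have setx: "set xs = set_mset R" unfolding xs_def by simp
  have inR: "\<And>i. i < length xs \<Longrightarrow> 0 \<le> xs!i \<and> xs!i \<le> B"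
    using assms(4) setx nth_mem by metis
  have a0: "0 \<le> a" "c \<le> B" using inR len k1 a_def c_def by auto
  have ab: "a \<le> b" "b \<le> c" using sxs len k1 unfolding a_def b_def c_def
    by (auto simp: sorted_iff_nth_mono)
  have medR: "median R = b"
    unfolding median_def using assms(1,3) k os(2) mk by simp
  have medx: "median (R + {#x#}) = (b + max a (min x c)) / 2" for x
  proof -
    have "size (R + {#x#}) = 2*k+2" using assms(1) k by simp
    then have "median (R + {#x#}) = (insort x xs ! k + insort x xs ! (k+1)) / 2"
      unfolding median_def ord_stat_def xs_def by simp
    then show ?thesis using med_insert[OF sxs len k1] a_def b_def c_def by simp
  qed
  have f: "\<bar>median (R + {#x#}) - median R\<bar> = \<bar>max a (min x c) - b\<bar> / 2" for x
  proof -
    have "(b + max a (min x c)) / 2 - b = (max a (min x c) - b) / 2" by (simp add: field_simps)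
    then show ?thesis unfolding medx medR by simp
  qed
  have B0: "0 \<le> B" using a0 ab by linarith
  show ?thesis
    unfolding RS_median_def os f
  proof (rule cSup_eq_maximum)
    show "max (c - b) (b - a) / 2 \<in> (\<lambda>x. \<bar>max a (min x c) - b\<bar> / 2) ` {0..B}"
    proof (cases "c - b \<le> b - a")
      case True
      then show ?thesis using B0 a0 ab
        by (intro image_eqI[of _ _ 0]) (auto simp: max_def min_def)
    next
      case False
      then show ?thesis using B0 a0 ab
        by (intro image_eqI[of _ _ B]) (auto simp: max_def min_def)
    qed
  next
    fix y assume "y \<in> (\<lambda>x. \<bar>max a (min x c) - b\<bar> / 2) ` {0..B}"
    then obtain x where "y = \<bar>max a (min x c) - b\<bar> / 2" by blast
    moreover have "\<bar>max a (min x c) - b\<bar> \<le> max (c - b) (b - a)" using ab by linarith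
    ultimately show "y \<le> max (c - b) (b - a) / 2" by simp
  qed
qed

end
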